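(* Let $G$ be a directed graph with real edge weights and no cycle of negative or zero weight, and let $(s_1,t_1),(s_2,t_2)$ be vertex pairs with $t_i$ reachable from $s_i$. Let $k^*$ be the minimum, over all pairs $(Q_1,Q_2)$ with $Q_i$ a shortest $s_i$–$t_i$ path, of the number of common vertices of $Q_1,Q_2$ outside $\{s_1,t_1\}\cap\{s_2,t_2\}$. Let $P_1,P_2$ be shortest paths from $s_1$ to $t_1$ and from $s_2$ to $t_2$ respectively that intersect in exactly $k^*$ internal vertices, and let $(u,v)$ be a concordant pair for $P_1,P_2$. Then the subpaths $P_1[u,v]$ and $P_2[u,v]$ have exactly $\delta(u,v)$ vertices in common, and these common vertices are precisely the $(u,v)$-distance-critical vertices.
   Context: For a path $P$ and vertices $x,y$ on $P$, $x$ precedes $y$ if $x=y$ or $x$ appears before $y$ on $P$; $P[x,y]$ is the subpath from $x$ to $y$. Paths from $x_1$ to $y_1$ and from $x_2$ to $y_2$ are internally vertex-disjoint if they share no vertex outside $\{x_1,y_1\}\cap\{x_2,y_2\}$. A pair $(a,b)$, not contained in $\{x_1,y_1\}\cap\{x_2,y_2\}$, is a concordant pair for paths $P_1$ (from $x_1$ to $y_1$) and $P_2$ (from $x_2$ to $y_2$) if $a$ precedes $b$ on both paths, $P_1[x_1,a]$ and $P_2[x_2,a]$ are internally vertex-disjoint, and $P_1[b,y_1]$ and $P_2[b,y_2]$ are internally vertex-disjoint. A vertex $w$ is $(x,y)$-distance-critical if $w\in\{x,y\}$ or removing $w$ from $G$ increases the distance from $x$ to $y$; $\delta(x,y)$ is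 the number of $(x,y)$-distance-critical vertices (so $\delta(x,x)=1$). *)

theory Defs
  imports "HOL-Library.Extended_Real"
begin

definition wf_digraph :: "'a set \<Rightarrow> ('a \<times> 'a) set \<Rightarrow> bool" where
  "wf_digraph V E \<longleftrightarrow> finite V \<and> E \<subseteq> V \<times> V"

definition is_walk :: "'a set \<Rightarrow> ('a \<times> 'a) set \<Rightarrow> 'a list \<Rightarrow> bool" where
  "is_walk V E p \<longleftrightarrow> p \<noteq> [] \<and> set p \<subseteq> V \<and> (\<forall>i. Suc i < length p \<longrightarrow> (p ! i, p ! Suc i) \<in> E)"

definition is_path :: "'a set \<Rightarrow> ('a \<times> 'a) set \<Rightarrow> 'a list \<Rightarrow> bool" where
  "is_path V E p \<longleftrightarrow> is_walk V E p \<and> distinct p"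

definition is_cycle :: "'a set \<Rightarrow> ('a \<times> 'a) set \<Rightarrow> 'a list \<Rightarrow> bool" where
  "is_cycle V E c \<longleftrightarrow> is_walk V E c \<and> length c \<ge> 2 \<and> hd c = last c \<and> distinct (tl c)"

definition pweight :: "('a \<Rightarrow> 'a \<Rightarrow> real) \<Rightarrow> 'a list \<Rightarrow> real" where
  "pweight w p = (\<Sum>i<length p - 1. w (p ! i) (p ! Suc i))"

definition path_from_to :: "'a set \<Rightarrow> ('a \<times> 'a) set \<Rightarrow> 'a list \<Rightarrow> 'a \<Rightarrow> 'a \<Rightarrow> bool" where
  "path_from_to V E p x y \<longleftrightarrow> is_path V E p \<and> hd p = x \<and> last p = y"

definition reachable :: "'a set \<Rightarrow> ('a \<times> 'a) set \<Rightarrow> 'a \<Rightarrow> 'a \<Rightarrow> bool" where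
  "reachable V E x y \<longleftrightarrow> (\<exists>p. path_from_to V E p x y)"

text \<open>Distance from x to y in G (\<infinity> if y is not reachable).\<close>
definition dist :: "'a set \<Rightarrow> ('a \<times> 'a) set \<Rightarrow> ('a \<Rightarrow> 'a \<Rightarrow> real) \<Rightarrow> 'a \<Rightarrow> 'a \<Rightarrow> ereal" where
  "dist V E w x y = Inf {ereal (pweight w p) | p. path_from_to V E p x y}"

definition del_vertex_V :: "'a set \<Rightarrow> 'a \<Rightarrow> 'a set" where
  "del_vertex_V V z = V - {z}"

definition del_vertex_E :: "('a \<times> 'a) set \<Rightarrow> 'a \<Rightarrow> ('a \<times> 'a) set" where
  "del_vertex_E E z = {(a, b) \<in> E. a \<noteq> z \<and> b \<noteq> z}"

definition shortest_path :: "'a set \<Rightarrow> ('a \<times> 'a) set \<Rightarrow> ('a \<Rightarrow> 'a \<Rightarrow> real) \<Rightarrow> 'a list \<Rightarrow> 'a \<Rightarrow> 'a \<Rightarrow> bool" where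
  "shortest_path V E w p x y \<longleftrightarrow> path_from_to V E p x y \<and> ereal (pweight w p) = dist V E w x y"

definition pos :: "'a list \<Rightarrow> 'a \<Rightarrow> nat" where
  "pos P x = (LEAST i. i < length P \<and> P ! i = x)"

definition precedes :: "'a list \<Rightarrow> 'a \<Rightarrow> 'a \<Rightarrow> bool" where
  "precedes P x y \<longleftrightarrow> x \<in> set P \<and> y \<in> set P \<and> (x = y \<or> pos P x < pos P y)"

definition subpath :: "'a list \<Rightarrow> 'a \<Rightarrow> 'a \<Rightarrow> 'a list" where
  "subpath P x y = drop (pos P x) (take (Suc (pos P y)) P)"

definition int_disjoint :: "'a list \<Rightarrow> 'a \<Rightarrow> 'a \<Rightarrow> 'a list \<Rightarrow> 'a \<Rightarrow> 'a \<Rightarrow> bool" where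
  "int_disjoint P1 x1 y1 P2 x2 y2 \<longleftrightarrow> set P1 \<inter> set P2 \<subseteq> {x1, y1} \<inter> {x2, y2}"

definition concordant :: "'a list \<Rightarrow> 'a \<Rightarrow> 'a \<Rightarrow> 'a list \<Rightarrow> 'a \<Rightarrow> 'a \<Rightarrow> 'a \<Rightarrow> 'a \<Rightarrow> bool" where
  "concordant P1 x1 y1 P2 x2 y2 a b \<longleftrightarrow>
     \<not> ({a, b} \<subseteq> {x1, y1} \<inter> {x2, y2}) \<and>
     precedes P1 a b \<and> precedes P2 a b \<and>
     int_disjoint (subpath P1 x1 a) x1 a (subpath P2 x2 a) x2 a \<and>
     int_disjoint (subpath P1 b y1) b y1 (subpath P2 b y2) b y2"

definition dist_critical :: "'a set \<Rightarrow> ('a \<times> 'a) set \<Rightarrow> ('a \<Rightarrow> 'a \<Rightarrow> real) \<Rightarrow> 'a \<Rightarrow> 'a \<Rightarrow> 'a \<Rightarrow> bool" where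
  "dist_critical V E w x y z \<longleftrightarrow> z \<in> V \<and>
     (z \<in> {x, y} \<or> dist (del_vertex_V V z) (del_vertex_E E z) w x y > dist V E w x y)"

definition delta :: "'a set \<Rightarrow> ('a \<times> 'a) set \<Rightarrow> ('a \<Rightarrow> 'a \<Rightarrow> real) \<Rightarrow> 'a \<Rightarrow> 'a \<Rightarrow> nat" where
  "delta V E w x y = card {z. dist_critical V E w x y z}"

definition n_common :: "'a list \<Rightarrow> 'a \<Rightarrow> 'a \<Rightarrow> 'a list \<Rightarrow> 'a \<Rightarrow> 'a \<Rightarrow> nat" where
  "n_common Q1 s1 t1 Q2 s2 t2 = card ((set Q1 \<inter> set Q2) - ({s1, t1} \<inter> {s2, t2}))"

definition kstar :: "'a set \<Rightarrow> ('a \<times> 'a) set \<Rightarrow> ('a \<Rightarrow> 'a \<Rightarrow> real) \<Rightarrow> 'a \<Rightarrow> 'a \<Rightarrow> 'a \<Rightarrow> 'a \<Rightarrow> nat" where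
  "kstar V E w s1 t1 s2 t2 = (LEAST k. \<exists>Q1 Q2. shortest_path V E w Q1 s1 t1 \<and>
      shortest_path V E w Q2 s2 t2 \<and> n_common Q1 s1 t1 Q2 s2 t2 = k)"

end

theory Submission
  imports Defs
begin

fun pw :: "('a \<Rightarrow> 'a \<Rightarrow> real) \<Rightarrow> 'a list \<Rightarrow> real" where
  "pw w (a # b # p) = w a b + pw w (b # p)"
| "pw w _ = 0"

lemma pweight_pw: "pweight w p = pw w p"
proof (induction w p rule: pw.induct)
  case (1 w a b p)
  have "pweight w (a # b # p) = (\<Sum>i<Suc (length p). w ((a # b # p) ! i) ((a # b # p) ! Suc i))"
    by (simp add: pweight_def)
  also have "\<dots> = w a b + (\<Sum>i<length p. w ((b # p) ! i) ((b # p) ! Suc i))"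
    by (subst sum.lessThan_Suc_shift) simp
  also have "\<dots> = w a b + pweight w (b # p)" by (simp add: pweight_def)
  finally show ?case using 1 by simp
qed (auto simp: pweight_def)

lemma pw_append: "pw w (xs @ [r] @ ys) = pw w (xs @ [r]) + pw w (r # ys)"
proof (induction xs)
  case Nil then show ?case by simp
next
  case (Cons a xs)
  then show ?case by (cases xs) auto
qed

definition cat :: "'a list \<Rightarrow> 'a list \<Rightarrow> 'a list" where
  "cat p q = p @ tl q"

lemma cat_pw: "p \<noteq> [] \<Longrightarrow> q \<noteq> [] \<Longrightarrow> last p = hd q \<Longrightarrow> pw w (cat p q) = pw w p + pw w q"
proof -
  assume a: "p \<noteq> []" "q \<noteq> []" "last p = hd q"
  have p: "p = butlast p @ [last p]" using a(1) by (rule append_butlast_last_id[symmetric])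
  have q: "q = last p # tl q" using a by simp
  have "cat p q = butlast p @ [last p] @ tl q" unfolding cat_def using p
    by (metis append_assoc)
  then have "pw w (cat p q) = pw w (butlast p @ [last p]) + pw w (last p # tl q)"
    using pw_append by metis
  then show ?thesis using p q by metis
qed

lemma cat_hd: "p \<noteq> [] \<Longrightarrow> hd (cat p q) = hd p" by (simp add: cat_def)
lemma cat_last: "q \<noteq> [] \<Longrightarrow> last p = hd q \<Longrightarrow> last (cat p q) = last q"
  by (cases q) (auto simp: cat_def)
lemma cat_set: "q \<noteq> [] \<Longrightarrow> p \<noteq> [] \<Longrightarrow> last p = hd q \<Longrightarrow> set (cat p q) = set p \<union> set q"
  by (cases q) (auto simp: cat_def)
lemma cat_ne: "p \<noteq> [] \<Longrightarrow> cat p q \<noteq> []" by (simp add: cat_def)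
lemma cat_length: "q \<noteq> [] \<Longrightarrow> length (cat p q) = length p + length q - 1"
  by (cases q) (auto simp: cat_def)

lemma is_walk_succ: "is_walk V E p \<longleftrightarrow> p \<noteq> [] \<and> set p \<subseteq> V \<and> successively (\<lambda>a b. (a, b) \<in> E) p"
  unfolding is_walk_def successively_conv_nth by blast

lemma cat_walk: "is_walk V E p \<Longrightarrow> is_walk V E q \<Longrightarrow> last p = hd q \<Longrightarrow> is_walk V E (cat p q)"
  unfolding is_walk_succ cat_def
  by (cases q) (auto simp: successively_append_iff successively_Cons)



definition seg :: "'a list \<Rightarrow> nat \<Rightarrow> nat \<Rightarrow> 'a list" where
  "seg P i j = drop i (take (Suc j) P)"

lemma subpath_seg: "subpath P x y = seg P (pos P x) (pos P y)"
  by (simp add: subpath_def seg_def)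

lemma seg_length: "j < length P \<Longrightarrow> length (seg P i j) = Suc j - i"
  by (simp add: seg_def)

lemma seg_nth: "j < length P \<Longrightarrow> k < Suc j - i \<Longrightarrow> seg P i j ! k = P ! (i + k)"
  by (simp add: seg_def)

lemma seg_ne: "i \<le> j \<Longrightarrow> j < length P \<Longrightarrow> seg P i j \<noteq> []"
  by (simp add: seg_def)

lemma seg_hd: "i \<le> j \<Longrightarrow> j < length P \<Longrightarrow> hd (seg P i j) = P ! i"
  by (simp add: seg_def hd_drop_conv_nth)

lemma seg_last: "i \<le> j \<Longrightarrow> j < length P \<Longrightarrow> last (seg P i j) = P ! j"
  by (simp add: seg_def last_conv_nth)

lemma seg_set: "j < length P \<Longrightarrow> set (seg P i j) = {P ! k | k. i \<le> k \<and> k \<le> j}"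
proof -
  assume j: "j < length P"
  show ?thesis
  proof (intro set_eqI iffI)
    fix c assume "c \<in> set (seg P i j)"
    then obtain k where "k < length (seg P i j)" "seg P i j ! k = c" by (auto simp: in_set_conv_nth)
    then show "c \<in> {P ! k | k. i \<le> k \<and> k \<le> j}" using j
      by (auto simp: seg_length seg_nth intro!: exI[of _ "i + k"])
  next
    fix c assume "c \<in> {P ! k | k. i \<le> k \<and> k \<le> j}"
    then obtain k where k: "i \<le> k" "k \<le> j" "c = P ! k" by auto
    then have "seg P i j ! (k - i) = c" "k - i < length (seg P i j)" using j
      by (auto simp: seg_length seg_nth)
    then show "c \<in> set (seg P i j)" by (metis nth_mem)
  qed
qed

lemma seg_walk: "is_walk V E P \<Longrightarrow> i \<le> j \<Longrightarrow> j < length P \<Longrightarrow> is_walk V E (seg P i j)"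
  unfolding is_walk_def
proof (intro conjI allI impI)
  assume a: "P \<noteq> [] \<and> set P \<subseteq> V \<and> (\<forall>i. Suc i < length P \<longrightarrow> (P ! i, P ! Suc i) \<in> E)"
    "i \<le> j" "j < length P"
  show "seg P i j \<noteq> []" using a by (simp add: seg_ne)
  show "set (seg P i j) \<subseteq> V" using a unfolding seg_def
    by (meson order.trans set_drop_subset set_take_subset)
  fix k assume "Suc k < length (seg P i j)"
  then show "(seg P i j ! k, seg P i j ! Suc k) \<in> E" using a
    by (auto simp: seg_length seg_nth)
qed

lemma seg_distinct: "distinct P \<Longrightarrow> distinct (seg P i j)"
  by (simp add: seg_def)

lemma seg_full: "P \<noteq> [] \<Longrightarrow> seg P 0 (length P - 1) = P"
  by (simp add: seg_def)

lemma seg_split: "i \<le> j \<Longrightarrow> j \<le> k \<Longrightarrow> k < length P \<Longrightarrow>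
  pw w (seg P i k) = pw w (seg P i j) + pw w (seg P j k)"
proof -
  assume a: "i \<le> j" "j \<le> k" "k < length P"
  define L where "L = seg P i k"
  have jl: "j - i < length L" using a by (simp add: L_def seg_length)
  have "L = take (j - i) L @ [L ! (j - i)] @ drop (Suc (j - i)) L"
    using id_take_nth_drop[OF jl] by simp
  then have "pw w L = pw w (take (j - i) L @ [L ! (j - i)]) + pw w (L ! (j - i) # drop (Suc (j - i)) L)"
    by (metis pw_append)
  also have "take (j - i) L @ [L ! (j - i)] = take (Suc (j - i)) L"
    using jl by (simp add: take_Suc_conv_app_nth)
  also have "\<dots> = seg P i j" using a unfolding L_def seg_def
    by (simp add: take_drop min_def)
  also have "L ! (j - i) # drop (Suc (j - i)) L = drop (j - i) L"
    using jl by (simp add: Cons_nth_drop_Suc)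
  also have "\<dots> = seg P j k" using a unfolding L_def seg_def by simp
  finally show ?thesis unfolding L_def .
qed

lemma pos_nth: "distinct P \<Longrightarrow> k < length P \<Longrightarrow> pos P (P ! k) = k"
  unfolding pos_def
  by (rule Least_equality) (auto simp: nth_eq_iff_index_eq intro: leI)

lemma pos_in: "distinct P \<Longrightarrow> c \<in> set P \<Longrightarrow> pos P c < length P \<and> P ! pos P c = c"
  by (metis in_set_conv_nth pos_nth)

lemma seg_mem: "distinct P \<Longrightarrow> j < length P \<Longrightarrow>
   c \<in> set (seg P i j) \<longleftrightarrow> c \<in> set P \<and> i \<le> pos P c \<and> pos P c \<le> j"
  using pos_in[of P c] pos_nth[of P] by (auto simp: seg_set) metis



locale posg =
  fixes V :: "'a set" and E :: "('a \<times> 'a) set" and w :: "'a \<Rightarrow> 'a \<Rightarrow> real"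
  assumes cyc: "\<And>c. is_cycle V E c \<Longrightarrow> pweight w c > 0"
begin

lemma closed_pos: "is_walk V E c \<Longrightarrow> length c \<ge> 2 \<Longrightarrow> hd c = last c \<Longrightarrow> pw w c > 0"
proof (induction "length c" arbitrary: c rule: less_induct)
  case less
  show ?case
  proof (cases "distinct (tl c)")
    case True
    then have "is_cycle V E c" using less.prems by (simp add: is_cycle_def)
    then show ?thesis using cyc pweight_pw by metis
  next
    case False
    obtain a t where c: "c = a # t" using less.prems by (cases c) auto
    from False c obtain xs ys zs r where t: "t = xs @ [r] @ ys @ [r] @ zs"
      using not_distinct_decomp by fastforce
    define c1 where "c1 = (a # xs) @ [r] @ zs"
    define c2 where "c2 = r # ys @ [r]"
    have "pw w c = pw w ((a # xs) @ [r]) + pw w (r # ys @ [r] @ zs)"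
      using pw_append[of w "a # xs" r "ys @ [r] @ zs"] c t by simp
    also have "pw w (r # ys @ [r] @ zs) = pw w c2 + pw w (r # zs)"
      using pw_append[of w "r # ys" r zs] unfolding c2_def by simp
    finally have e: "pw w c = pw w c1 + pw w c2"
      using pw_append[of w "a # xs" r zs] unfolding c1_def by simp
    have wc: "c \<noteq> [] \<and> set c \<subseteq> V \<and> successively (\<lambda>a b. (a, b) \<in> E) c"
      using less.prems is_walk_succ by metis
    have w1: "is_walk V E c1" using wc unfolding is_walk_succ c1_def c t
      by (auto simp: successively_append_iff successively_Cons hd_append)
    have w2: "is_walk V E c2" using wc unfolding is_walk_succ c2_def c t
      by (auto simp: successively_append_iff successively_Cons hd_append)
    have l1: "length c1 < length c" "length c1 \<ge> 2" unfolding c1_def c t by auto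
    have l2: "length c2 < length c" "length c2 \<ge> 2" unfolding c2_def c t by auto
    have h1: "hd c1 = last c1" using less.prems unfolding c1_def c t by (cases zs) auto
    have h2: "hd c2 = last c2" unfolding c2_def by simp
    have "pw w c1 > 0" using less.hyps[OF l1(1) w1 l1(2) h1] .
    moreover have "pw w c2 > 0" using less.hyps[OF l2(1) w2 l2(2) h2] .
    ultimately show ?thesis using e by simp
  qed
qed

lemma walk_to_path: "is_walk V E p \<Longrightarrow>
  \<exists>q. is_path V E q \<and> hd q = hd p \<and> last q = last p \<and> set q \<subseteq> set p \<and> pw w q \<le> pw w p"
proof (induction "length p" arbitrary: p rule: less_induct)
  case less
  show ?case
  proof (cases "distinct p")
    case True
    then show ?thesis using less.prems by (auto simp: is_path_def)
  next
    case False
    from False obtain xs ys zs r where p: "p = xs @ [r] @ ys @ [r] @ zs"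
      using not_distinct_decomp by fastforce
    define p1 where "p1 = xs @ [r] @ zs"
    define c2 where "c2 = r # ys @ [r]"
    have "pw w p = pw w (xs @ [r]) + pw w (r # ys @ [r] @ zs)"
      using pw_append[of w xs r "ys @ [r] @ zs"] p by simp
    also have "pw w (r # ys @ [r] @ zs) = pw w c2 + pw w (r # zs)"
      using pw_append[of w "r # ys" r zs] unfolding c2_def by simp
    finally have e: "pw w p = pw w p1 + pw w c2"
      using pw_append[of w xs r zs] unfolding p1_def by simp
    have wc: "p \<noteq> [] \<and> set p \<subseteq> V \<and> successively (\<lambda>a b. (a, b) \<in> E) p"
      using less.prems is_walk_succ by metis
    have w1: "is_walk V E p1" using wc unfolding is_walk_succ p1_def p
      by (auto simp: successively_append_iff successively_Cons hd_append)
    have w2: "is_walk V E c2" using wc unfolding is_walk_succ c2_def p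
      by (auto simp: successively_append_iff successively_Cons hd_append)
    have "pw w c2 > 0" using closed_pos[OF w2] unfolding c2_def by simp
    have l1: "length p1 < length p" unfolding p1_def p by auto
    obtain q where q: "is_path V E q \<and> hd q = hd p1 \<and> last q = last p1 \<and> set q \<subseteq> set p1 \<and> pw w q \<le> pw w p1"
      using less.hyps[OF l1 w1] by blast
    have "hd p1 = hd p" "last p1 = last p" unfolding p1_def p by (cases xs; simp; cases zs; simp)+
    moreover have "set p1 \<subseteq> set p" unfolding p1_def p by auto
    ultimately show ?thesis using q e \<open>pw w c2 > 0\<close> by (metis dual_order.trans le_add_same_cancel1 less_le)
  qed
qed

lemma dist_le: "path_from_to V E p x y \<Longrightarrow> dist V E w x y \<le> ereal (pw w p)"
  unfolding dist_def by (rule Inf_lower) (auto simp: pweight_pw)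

lemma walk_ge:
  assumes "shortest_path V E w P s t" "is_walk V E W" "hd W = s" "last W = t"
  shows "pw w P \<le> pw w W"
proof -
  obtain q where q: "is_path V E q \<and> hd q = hd W \<and> last q = last W \<and> set q \<subseteq> set W \<and> pw w q \<le> pw w W"
    using walk_to_path[OF assms(2)] by blast
  then have "dist V E w s t \<le> ereal (pw w q)" using assms by (intro dist_le) (auto simp: path_from_to_def)
  then have "ereal (pw w P) \<le> ereal (pw w q)" using assms(1) by (simp add: shortest_path_def pweight_pw)
  then show ?thesis using q by simp
qed

lemma walk_shortest:
  assumes "shortest_path V E w P s t" "is_walk V E W" "hd W = s" "last W = t" "pw w W \<le> pw w P"
  shows "\<exists>Q. shortest_path V E w Q s t \<and> set Q \<subseteq> set W"
proof -
  obtain q where q: "is_path V E q \<and> hd q = hd W \<and> last q = last W \<and> set q \<subseteq> set W \<and> pw w q \<le> pw w W"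
    using walk_to_path[OF assms(2)] by blast
  then have pq: "path_from_to V E q s t" using assms by (auto simp: path_from_to_def)
  then have "dist V E w s t \<le> ereal (pw w q)" by (rule dist_le)
  moreover have "ereal (pw w q) \<le> dist V E w s t"
  proof -
    have "pw w q \<le> pw w P" using assms(5) q by linarith
    then have "ereal (pw w q) \<le> ereal (pw w P)" by simp
    also have "ereal (pw w P) = dist V E w s t" using assms(1) by (simp add: shortest_path_def pweight_pw)
    finally show ?thesis .
  qed
  ultimately have "ereal (pweight w q) = dist V E w s t" by (simp add: pweight_pw)
  then show ?thesis using pq q by (auto simp: shortest_path_def)
qed

end


lemma cat2: "is_walk V E A \<Longrightarrow> is_walk V E B \<Longrightarrow> last A = hd B \<Longrightarrow>
  is_walk V E (cat A B) \<and> hd (cat A B) = hd A \<and> last (cat A B) = last B \<and>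
  pw w (cat A B) = pw w A + pw w B \<and> set (cat A B) = set A \<union> set B"
  using cat_walk cat_hd cat_last cat_pw cat_set by (metis is_walk_def)

lemma segf: "is_walk V E P \<Longrightarrow> i \<le> j \<Longrightarrow> j < length P \<Longrightarrow>
  is_walk V E (seg P i j) \<and> hd (seg P i j) = P ! i \<and> last (seg P i j) = P ! j"
  using seg_walk seg_hd seg_last by metis

lemma spf: "shortest_path V E w P s t \<Longrightarrow> is_walk V E P \<and> distinct P \<and> P \<noteq> [] \<and>
   P ! 0 = s \<and> P ! (length P - 1) = t \<and> set P \<subseteq> V"
  unfolding shortest_path_def path_from_to_def is_path_def is_walk_def
  by (auto simp: hd_conv_nth last_conv_nth)

lemma pw_seg_full: "P \<noteq> [] \<Longrightarrow> pw w P = pw w (seg P 0 (length P - 1))"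
  using seg_full[of P] by simp

context posg begin

lemma seg_min:
  assumes sp: "shortest_path V E w P s t" and ij: "i \<le> j" "j < length P"
    and W: "is_walk V E W" "hd W = P ! i" "last W = P ! j"
  shows "pw w (seg P i j) \<le> pw w W"
proof -
  define n where "n = length P"
  have P: "is_walk V E P" "P \<noteq> []" "P ! 0 = s" "P ! (n - 1) = t" using spf[OF sp] n_def by auto
  have jn: "j \<le> n - 1" "n - 1 < length P" using ij P n_def by auto
  note A = segf[OF P(1), of 0 i] and B = segf[OF P(1), of j "n - 1"]
  have c1: "is_walk V E (cat (seg P 0 i) W) \<and> hd (cat (seg P 0 i) W) = s \<and> last (cat (seg P 0 i) W) = P ! j
     \<and> pw w (cat (seg P 0 i) W) = pw w (seg P 0 i) + pw w W"
    using cat2[of V E "seg P 0 i" W w] A ij W P by auto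
  have c2: "is_walk V E (cat (cat (seg P 0 i) W) (seg P j (n - 1))) \<and> hd (cat (cat (seg P 0 i) W) (seg P j (n - 1))) = s
    \<and> last (cat (cat (seg P 0 i) W) (seg P j (n - 1))) = t \<and>
    pw w (cat (cat (seg P 0 i) W) (seg P j (n - 1))) = pw w (seg P 0 i) + pw w W + pw w (seg P j (n - 1))"
    using cat2[of V E "cat (seg P 0 i) W" "seg P j (n - 1)" w] c1 B jn P by auto
  have "pw w P \<le> pw w (cat (cat (seg P 0 i) W) (seg P j (n - 1)))"
    using walk_ge[OF sp] c2 by blast
  moreover have "pw w P = pw w (seg P 0 i) + pw w (seg P i j) + pw w (seg P j (n - 1))"
    using pw_seg_full[OF P(2), of w] seg_split[of 0 i "n - 1" P w] seg_split[of i j "n - 1" P w] ij jn n_def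
    by simp
  ultimately show ?thesis using c2 by simp
qed

lemma seg_loc:
  assumes sp: "shortest_path V E w P s t" and ij: "i \<le> j" "j < length P"
    and Q: "is_walk V E Q" "distinct Q" "hd Q = P ! i" "last Q = P ! j"
    and Qw: "pw w Q \<le> pw w (seg P i j)"
    and c: "c \<in> set Q" "c \<in> set P"
  shows "i \<le> pos P c \<and> pos P c \<le> j"
proof (rule ccontr)
  assume nc: "\<not> (i \<le> pos P c \<and> pos P c \<le> j)"
  define n where "n = length P"
  define m where "m = length Q"
  define r where "r = pos P c"
  define q where "q = pos Q c"
  have P: "is_walk V E P" "P \<noteq> []" "P ! 0 = s" "P ! (n - 1) = t" "distinct P" using spf[OF sp] n_def n_def m_def by auto
  have Qn: "Q \<noteq> []" using Q is_walk_def by blast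
  have r: "r < n" "P ! r = c" using pos_in[OF P(5) c(2)] r_def n_def n_def m_def by auto
  have q: "q < m" "Q ! q = c" using pos_in[OF Q(2) c(1)] q_def m_def n_def m_def by auto
  have Q0: "Q ! 0 = P ! i" "Q ! (m - 1) = P ! j" using Q Qn m_def by (auto simp: hd_conv_nth last_conv_nth)
  have Qs: "pw w Q = pw w (seg Q 0 q) + pw w (seg Q q (m - 1))"
    using pw_seg_full[OF Qn, of w] seg_split[of 0 q "m - 1" Q w] q m_def n_def m_def by simp
  show False
  proof (cases "r < i")
    case True
    note A = segf[OF P(1), of 0 r] and B = segf[OF Q(1), of q "m - 1"] and C = segf[OF P(1), of j "n - 1"]
    have c1: "is_walk V E (cat (seg P 0 r) (seg Q q (m - 1))) \<and> hd (cat (seg P 0 r) (seg Q q (m - 1))) = s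
      \<and> last (cat (seg P 0 r) (seg Q q (m - 1))) = P ! j
      \<and> pw w (cat (seg P 0 r) (seg Q q (m - 1))) = pw w (seg P 0 r) + pw w (seg Q q (m - 1))"
      using cat2[of V E "seg P 0 r" "seg Q q (m - 1)" w] A B r q Q0 P m_def n_def m_def by auto
    have c2: "pw w P \<le> pw w (seg P 0 r) + pw w (seg Q q (m - 1)) + pw w (seg P j (n - 1))"
      using cat2[of V E "cat (seg P 0 r) (seg Q q (m - 1))" "seg P j (n - 1)" w] c1 C ij P n_def
        walk_ge[OF sp, of "cat (cat (seg P 0 r) (seg Q q (m - 1))) (seg P j (n - 1))"] n_def m_def by auto
    have Ps: "pw w P = pw w (seg P 0 r) + pw w (seg P r i) + pw w (seg P i j) + pw w (seg P j (n - 1))"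
      using pw_seg_full[OF P(2), of w] seg_split[of 0 r "n - 1" P w] seg_split[of r i "n - 1" P w]
        seg_split[of i j "n - 1" P w] True ij n_def n_def m_def by simp
    note D1 = segf[OF P(1), of r i] and D2 = segf[OF Q(1), of 0 q]
    have cc: "is_walk V E (cat (seg P r i) (seg Q 0 q)) \<and> hd (cat (seg P r i) (seg Q 0 q)) = c
      \<and> last (cat (seg P r i) (seg Q 0 q)) = c
      \<and> pw w (cat (seg P r i) (seg Q 0 q)) = pw w (seg P r i) + pw w (seg Q 0 q)"
      using cat2[of V E "seg P r i" "seg Q 0 q" w] D1 D2 r q Q0 True ij m_def n_def n_def m_def by auto
    have "length (cat (seg P r i) (seg Q 0 q)) \<ge> 2"
      using cat_length[of "seg Q 0 q" "seg P r i"] seg_length[of i P r] seg_length[of q Q 0] seg_ne[of 0 q Q]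
        True ij q m_def n_def m_def by auto
    then have "pw w (cat (seg P r i) (seg Q 0 q)) > 0" using closed_pos cc by metis
    then show False using cc c2 Ps Qs Qw by linarith
  next
    case False
    then have rj: "j < r" using nc r_def n_def m_def by auto
    note A = segf[OF P(1), of 0 i] and B = segf[OF Q(1), of 0 q] and C = segf[OF P(1), of r "n - 1"]
    have c1: "is_walk V E (cat (seg P 0 i) (seg Q 0 q)) \<and> hd (cat (seg P 0 i) (seg Q 0 q)) = s
      \<and> last (cat (seg P 0 i) (seg Q 0 q)) = c
      \<and> pw w (cat (seg P 0 i) (seg Q 0 q)) = pw w (seg P 0 i) + pw w (seg Q 0 q)"
      using cat2[of V E "seg P 0 i" "seg Q 0 q" w] A B r q Q0 P ij m_def n_def m_def by auto
    have c2: "pw w P \<le> pw w (seg P 0 i) + pw w (seg Q 0 q) + pw w (seg P r (n - 1))"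
      using cat2[of V E "cat (seg P 0 i) (seg Q 0 q)" "seg P r (n - 1)" w] c1 C r P n_def
        walk_ge[OF sp, of "cat (cat (seg P 0 i) (seg Q 0 q)) (seg P r (n - 1))"] n_def m_def by auto
    have Ps: "pw w P = pw w (seg P 0 i) + pw w (seg P i j) + pw w (seg P j r) + pw w (seg P r (n - 1))"
      using pw_seg_full[OF P(2), of w] seg_split[of 0 i "n - 1" P w] seg_split[of i j "n - 1" P w]
        seg_split[of j r "n - 1" P w] rj r ij n_def n_def m_def by simp
    note D1 = segf[OF Q(1), of q "m - 1"] and D2 = segf[OF P(1), of j r]
    have cc: "is_walk V E (cat (seg Q q (m - 1)) (seg P j r)) \<and> hd (cat (seg Q q (m - 1)) (seg P j r)) = c
      \<and> last (cat (seg Q q (m - 1)) (seg P j r)) = c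
      \<and> pw w (cat (seg Q q (m - 1)) (seg P j r)) = pw w (seg Q q (m - 1)) + pw w (seg P j r)"
      using cat2[of V E "seg Q q (m - 1)" "seg P j r" w] D1 D2 r q Q0 rj m_def n_def n_def m_def by auto
    have "length (cat (seg Q q (m - 1)) (seg P j r)) \<ge> 2"
      using cat_length[of "seg P j r" "seg Q q (m - 1)"] seg_length[of r P j] seg_length[of "m - 1" Q q]
        seg_ne[of j r P] rj r q m_def n_def n_def m_def by auto
    then have "pw w (cat (seg Q q (m - 1)) (seg P j r)) > 0" using closed_pos cc by metis
    then show False using cc c2 Ps Qs Qw by linarith
  qed
qed

end


context posg begin

lemma same_case:
  assumes sp: "shortest_path V E w P s t" and abc: "a < b" "b < c" "c < length P"
    and R: "is_walk V E R" "hd R = P ! a" "last R = P ! c"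
    and Rw: "pw w R \<le> pw w (seg P a c)" and zR: "P ! b \<notin> set R"
    and RO: "set R \<inter> set Ot \<subseteq> set P"
  shows "\<exists>Q. shortest_path V E w Q s t \<and> set Q \<inter> set Ot \<subseteq> (set P \<inter> set Ot) - {P ! b}"
proof -
  define n where "n = length P"
  have P: "is_walk V E P" "P \<noteq> []" "P ! 0 = s" "P ! (n - 1) = t" "distinct P" using spf[OF sp] n_def by auto
  note A = segf[OF P(1), of 0 a] and C = segf[OF P(1), of c "n - 1"]
  have c1: "is_walk V E (cat (seg P 0 a) R) \<and> hd (cat (seg P 0 a) R) = s \<and> last (cat (seg P 0 a) R) = P ! c
     \<and> pw w (cat (seg P 0 a) R) = pw w (seg P 0 a) + pw w R \<and> set (cat (seg P 0 a) R) = set (seg P 0 a) \<union> set R"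
    using cat2[of V E "seg P 0 a" R w] A abc R P n_def by auto
  define W where "W = cat (cat (seg P 0 a) R) (seg P c (n - 1))"
  have c2: "is_walk V E W \<and> hd W = s \<and> last W = t \<and>
    pw w W = pw w (seg P 0 a) + pw w R + pw w (seg P c (n - 1)) \<and>
    set W = set (seg P 0 a) \<union> set R \<union> set (seg P c (n - 1))"
    using cat2[of V E "cat (seg P 0 a) R" "seg P c (n - 1)" w] c1 C abc P n_def unfolding W_def by auto
  have Ps: "pw w P = pw w (seg P 0 a) + pw w (seg P a c) + pw w (seg P c (n - 1))"
    using pw_seg_full[OF P(2), of w] seg_split[of 0 a "n - 1" P w] seg_split[of a c "n - 1" P w] abc n_def
    by simp
  obtain Q where Q: "shortest_path V E w Q s t" "set Q \<subseteq> set W"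
    using walk_shortest[OF sp, of W] c2 Ps Rw by auto
  have pb: "pos P (P ! b) = b" using pos_nth[OF P(5)] abc by auto
  have "set Q \<inter> set Ot \<subseteq> (set P \<inter> set Ot) - {P ! b}"
  proof
    fix x assume x: "x \<in> set Q \<inter> set Ot"
    then have xW: "x \<in> set W" using Q by auto
    show "x \<in> (set P \<inter> set Ot) - {P ! b}"
    proof (cases "x \<in> set R")
      case True
      then show ?thesis using x RO zR by auto
    next
      case False
      then have "x \<in> set (seg P 0 a) \<or> x \<in> set (seg P c (n - 1))" using xW c2 by auto
      then have "x \<in> set P \<and> pos P x \<noteq> b" using seg_mem[OF P(5), of a x 0] seg_mem[OF P(5), of "n - 1" x c]
        abc n_def by auto
      then show ?thesis using x pb by auto
    qed
  qed
  then show ?thesis using Q by blast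
qed

lemma cross_case:
  assumes spP: "shortest_path V E w P s t" and spO: "shortest_path V E w Ot s' t'"
    and ab: "a < b" "b < e" "e < length P"
    and bc: "b' < c'" "c' \<le> e'" "e' < length Ot"
    and Ob: "Ot ! b' = P ! b" and Oe: "Ot ! e' = P ! e"
    and R: "is_walk V E R" "hd R = P ! a" "last R = Ot ! c'"
    and zR: "P ! b \<notin> set R" and RI: "set R \<inter> (set P \<union> set Ot) \<subseteq> {P ! a, Ot ! c'}"
    and w1: "pw w R + pw w (seg Ot c' e') \<le> pw w (seg P a e)"
    and w2: "pw w (seg P b e) \<le> pw w (seg Ot b' e')"
  shows "\<exists>Q1 Q2. shortest_path V E w Q1 s t \<and> shortest_path V E w Q2 s' t' \<and>
     set Q1 \<inter> set Q2 \<subseteq> (set P \<inter> set Ot) - {P ! b}"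
proof -
  define n where "n = length P"
  define m where "m = length Ot"
  have P: "is_walk V E P" "P \<noteq> []" "P ! 0 = s" "P ! (n - 1) = t" "distinct P" using spf[OF spP] n_def by auto
  have Ot: "is_walk V E Ot" "Ot \<noteq> []" "Ot ! 0 = s'" "Ot ! (m - 1) = t'" "distinct Ot" using spf[OF spO] m_def by auto
  note A1 = segf[OF P(1), of 0 a] and B1 = segf[OF Ot(1), of c' e'] and C1 = segf[OF P(1), of e "n - 1"]
  have d1: "is_walk V E (cat (seg P 0 a) R) \<and> hd (cat (seg P 0 a) R) = s \<and> last (cat (seg P 0 a) R) = Ot ! c'
     \<and> pw w (cat (seg P 0 a) R) = pw w (seg P 0 a) + pw w R \<and> set (cat (seg P 0 a) R) = set (seg P 0 a) \<union> set R"
    using cat2[of V E "seg P 0 a" R w] A1 ab R P n_def by auto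
  have d2: "is_walk V E (cat (cat (seg P 0 a) R) (seg Ot c' e')) \<and> hd (cat (cat (seg P 0 a) R) (seg Ot c' e')) = s
     \<and> last (cat (cat (seg P 0 a) R) (seg Ot c' e')) = P ! e
     \<and> pw w (cat (cat (seg P 0 a) R) (seg Ot c' e')) = pw w (seg P 0 a) + pw w R + pw w (seg Ot c' e')
     \<and> set (cat (cat (seg P 0 a) R) (seg Ot c' e')) = set (seg P 0 a) \<union> set R \<union> set (seg Ot c' e')"
    using cat2[of V E "cat (seg P 0 a) R" "seg Ot c' e'" w] d1 B1 bc Oe by auto
  define W1 where "W1 = cat (cat (cat (seg P 0 a) R) (seg Ot c' e')) (seg P e (n - 1))"
  have d3: "is_walk V E W1 \<and> hd W1 = s \<and> last W1 = t \<and>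
    pw w W1 = pw w (seg P 0 a) + pw w R + pw w (seg Ot c' e') + pw w (seg P e (n - 1)) \<and>
    set W1 = set (seg P 0 a) \<union> set R \<union> set (seg Ot c' e') \<union> set (seg P e (n - 1))"
    using cat2[of V E "cat (cat (seg P 0 a) R) (seg Ot c' e')" "seg P e (n - 1)" w] d2 C1 ab P n_def
    unfolding W1_def by auto
  have Ps: "pw w P = pw w (seg P 0 a) + pw w (seg P a e) + pw w (seg P e (n - 1))"
    using pw_seg_full[OF P(2), of w] seg_split[of 0 a "n - 1" P w] seg_split[of a e "n - 1" P w] ab n_def
    by simp
  obtain Q1 where Q1: "shortest_path V E w Q1 s t" "set Q1 \<subseteq> set W1"
    using walk_shortest[OF spP, of W1] d3 Ps w1 by auto
  note A2 = segf[OF Ot(1), of 0 b'] and B2 = segf[OF P(1), of b e] and C2 = segf[OF Ot(1), of e' "m - 1"]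
  have f1: "is_walk V E (cat (seg Ot 0 b') (seg P b e)) \<and> hd (cat (seg Ot 0 b') (seg P b e)) = s'
     \<and> last (cat (seg Ot 0 b') (seg P b e)) = Ot ! e'
     \<and> pw w (cat (seg Ot 0 b') (seg P b e)) = pw w (seg Ot 0 b') + pw w (seg P b e)
     \<and> set (cat (seg Ot 0 b') (seg P b e)) = set (seg Ot 0 b') \<union> set (seg P b e)"
    using cat2[of V E "seg Ot 0 b'" "seg P b e" w] A2 B2 ab bc Ot Ob Oe by auto
  define W2 where "W2 = cat (cat (seg Ot 0 b') (seg P b e)) (seg Ot e' (m - 1))"
  have f2: "is_walk V E W2 \<and> hd W2 = s' \<and> last W2 = t' \<and>
    pw w W2 = pw w (seg Ot 0 b') + pw w (seg P b e) + pw w (seg Ot e' (m - 1)) \<and>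
    set W2 = set (seg Ot 0 b') \<union> set (seg P b e) \<union> set (seg Ot e' (m - 1))"
    using cat2[of V E "cat (seg Ot 0 b') (seg P b e)" "seg Ot e' (m - 1)" w] f1 C2 bc Ot m_def
    unfolding W2_def by auto
  have Os: "pw w Ot = pw w (seg Ot 0 b') + pw w (seg Ot b' e') + pw w (seg Ot e' (m - 1))"
    using pw_seg_full[OF Ot(2), of w] seg_split[of 0 b' "m - 1" Ot w] seg_split[of b' e' "m - 1" Ot w] bc m_def
    by simp
  obtain Q2 where Q2: "shortest_path V E w Q2 s' t'" "set Q2 \<subseteq> set W2"
    using walk_shortest[OF spO, of W2] f2 Os w2 by auto
  have pP: "pos P (P ! a) = a" "pos P (P ! b) = b" "pos P (P ! e) = e"
    using pos_nth[OF P(5)] ab by auto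
  have pO: "pos Ot (Ot ! b') = b'" "pos Ot (Ot ! c') = c'" "pos Ot (Ot ! e') = e'"
    using pos_nth[OF Ot(5)] bc by auto
  have "set W1 \<inter> set W2 \<subseteq> (set P \<inter> set Ot) - {P ! b}"
  proof
    fix x assume x: "x \<in> set W1 \<inter> set W2"
    have x2: "(x \<in> set Ot \<and> pos Ot x \<le> b') \<or> (x \<in> set P \<and> b \<le> pos P x \<and> pos P x \<le> e)
       \<or> (x \<in> set Ot \<and> e' \<le> pos Ot x)"
      using x f2 seg_mem[OF Ot(5), of b' x 0] seg_mem[OF P(5), of e x b] seg_mem[OF Ot(5), of "m - 1" x e']
        ab bc m_def by auto
    have x1: "(x \<in> set P \<and> pos P x \<le> a) \<or> (x \<in> set Ot \<and> c' \<le> pos Ot x \<and> pos Ot x \<le> e')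
       \<or> (x \<in> set P \<and> e \<le> pos P x)"
    proof -
      have "x \<in> set (seg P 0 a) \<or> x \<in> set R \<or> x \<in> set (seg Ot c' e') \<or> x \<in> set (seg P e (n - 1))"
        using x d3 by auto
      moreover have "x \<in> set R \<Longrightarrow> x = P ! a \<or> x = Ot ! c'"
        using RI x2 by auto
      ultimately show ?thesis
        using seg_mem[OF P(5), of a x 0] seg_mem[OF Ot(5), of e' x c'] seg_mem[OF P(5), of "n - 1" x e]
          ab bc n_def pP pO nth_mem[of a P] nth_mem[of c' Ot] by auto
    qed
    have Pe: "P ! e \<in> set Ot" "Ot ! e' \<in> set P" using Oe bc ab nth_mem by metis+
    have xb: "x = P ! b \<Longrightarrow> pos P x = b \<and> pos Ot x = b'" using pP pO Ob by metis
    show "x \<in> (set P \<inter> set Ot) - {P ! b}"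
      using x1 x2 xb Pe pP pO Oe ab bc pos_in[OF P(5), of x] pos_in[OF Ot(5), of x]
      by (smt (verit) DiffI Int_iff le_antisym le_trans not_less singletonD)
  qed
  then show ?thesis using Q1 Q2 by blast
qed

end


context posg begin

lemma exchange:
  assumes sp1: "shortest_path V E w P1 s1 t1" and sp2: "shortest_path V E w P2 s2 t2"
    and ij1: "i1 < b1" "b1 < j1" "j1 < length P1"
    and ij2: "i2 < b2" "b2 < j2" "j2 < length P2"
    and eu: "P1 ! i1 = P2 ! i2" and ev: "P1 ! j1 = P2 ! j2" and ez: "P1 ! b1 = P2 ! b2"
    and hw: "pw w (seg P1 i1 j1) = pw w (seg P2 i2 j2)"
    and R: "is_walk V E R" "distinct R" "hd R = P1 ! i1" "last R = P1 ! j1"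
    and zR: "P1 ! b1 \<notin> set R" and Rw: "pw w R \<le> pw w (seg P1 i1 j1)"
  shows "\<exists>Q1 Q2. shortest_path V E w Q1 s1 t1 \<and> shortest_path V E w Q2 s2 t2 \<and>
     set Q1 \<inter> set Q2 \<subseteq> (set P1 \<inter> set P2) - {P1 ! b1}"
proof -
  define z where "z = P1 ! b1"
  have P1: "is_walk V E P1" "distinct P1" using spf[OF sp1] by auto
  have P2: "is_walk V E P2" "distinct P2" using spf[OF sp2] by auto
  have pz1: "pos P1 z = b1" using pos_nth[OF P1(2)] ij1 z_def by auto
  have pz2: "pos P2 z = b2" using pos_nth[OF P2(2)] ij2 z_def ez by auto
  define n where "n = length R"
  have Rn: "R \<noteq> []" using R is_walk_def by blast
  have R0: "R ! 0 = P1 ! i1" "R ! (n - 1) = P1 ! j1" using R Rn n_def by (auto simp: hd_conv_nth last_conv_nth)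
  have loc1: "\<And>c. c \<in> set R \<Longrightarrow> c \<in> set P1 \<Longrightarrow> i1 \<le> pos P1 c \<and> pos P1 c \<le> j1"
    using seg_loc[OF sp1, of i1 j1 R] ij1 R Rw by auto
  have loc2: "\<And>c. c \<in> set R \<Longrightarrow> c \<in> set P2 \<Longrightarrow> i2 \<le> pos P2 c \<and> pos P2 c \<le> j2"
    using seg_loc[OF sp2, of i2 j2 R] ij2 R Rw hw eu ev by auto
  define X where "X c \<longleftrightarrow> (c \<in> set P1 \<and> i1 \<le> pos P1 c \<and> pos P1 c < b1) \<or> (c \<in> set P2 \<and> i2 \<le> pos P2 c \<and> pos P2 c < b2)" for c
  define Y where "Y c \<longleftrightarrow> (c \<in> set P1 \<and> b1 < pos P1 c \<and> pos P1 c \<le> j1) \<or> (c \<in> set P2 \<and> b2 < pos P2 c \<and> pos P2 c \<le> j2)" for c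
  have XY: "\<And>c. c \<in> set R \<Longrightarrow> c \<in> set P1 \<union> set P2 \<Longrightarrow> X c \<or> Y c"
  proof -
    fix c assume c: "c \<in> set R" "c \<in> set P1 \<union> set P2"
    have "c \<noteq> z" using c zR z_def by auto
    then have "pos P1 c \<noteq> b1 \<or> c \<notin> set P1" "pos P2 c \<noteq> b2 \<or> c \<notin> set P2"
      using pos_in[OF P1(2), of c] pos_in[OF P2(2), of c] pz1 pz2 z_def ez by metis+
    then show "X c \<or> Y c" using c loc1 loc2 unfolding X_def Y_def by fastforce
  qed
  have pu1: "pos P1 (P1 ! i1) = i1" "pos P1 (P1 ! j1) = j1" using pos_nth[OF P1(2)] ij1 by auto
  have pu2: "pos P2 (P1 ! i1) = i2" "pos P2 (P1 ! j1) = j2" using pos_nth[OF P2(2)] ij2 eu ev by auto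
  have Xu: "X (R ! 0)" using R0 pu1 ij1 nth_mem[of i1 P1] unfolding X_def by auto
  have nX: "\<not> X (R ! (n - 1))" using R0 pu1 pu2 ij1 ij2 unfolding X_def by auto
  have Yv: "Y (R ! (n - 1))" using R0 pu1 ij1 nth_mem[of j1 P1] unfolding Y_def by auto
  define IX where "IX = {i. i < n \<and> X (R ! i)}"
  have IXf: "finite IX" "IX \<noteq> {}" unfolding IX_def using Xu Rn n_def by auto
  define ix where "ix = Max IX"
  have ix: "ix < n" "X (R ! ix)" using Max_in[OF IXf] unfolding ix_def IX_def by auto
  have ixmax: "\<And>k. k < n \<Longrightarrow> X (R ! k) \<Longrightarrow> k \<le> ix" using Max_ge[OF IXf(1)] unfolding ix_def IX_def by auto
  have ixn0: "ix \<noteq> n - 1" using ix nX by metis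
  have ixn: "ix < n - 1" using ix ixn0 by linarith
  define iy where "iy = (LEAST i. ix < i \<and> i < n \<and> Y (R ! i))"
  have ex: "ix < n - 1 \<and> n - 1 < n \<and> Y (R ! (n - 1))" using ixn Yv by auto
  have iy: "ix < iy" "iy < n" "Y (R ! iy)" using LeastI[of "\<lambda>i. ix < i \<and> i < n \<and> Y (R ! i)", OF ex]
    unfolding iy_def by auto
  have iymin: "\<And>k. ix < k \<Longrightarrow> k < n \<Longrightarrow> Y (R ! k) \<Longrightarrow> iy \<le> k"
    unfolding iy_def by (rule Least_le) auto
  have inter: "\<And>k. ix < k \<Longrightarrow> k < iy \<Longrightarrow> R ! k \<notin> set P1 \<union> set P2"
  proof
    fix k assume k: "ix < k" "k < iy" "R ! k \<in> set P1 \<union> set P2"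
    have "k < n" using k iy by auto
    then have "X (R ! k) \<or> Y (R ! k)" using XY[of "R ! k"] k nth_mem n_def by auto
    then show False using ixmax[of k] iymin[of k] k \<open>k < n\<close> by auto
  qed
  define x where "x = R ! ix"
  define y where "y = R ! iy"
  define R' where "R' = seg R ix iy"
  have R'f: "is_walk V E R' \<and> hd R' = x \<and> last R' = y" using segf[OF R(1), of ix iy] iy ix n_def
    unfolding R'_def x_def y_def by auto
  have zR': "z \<notin> set R'" using zR z_def unfolding R'_def seg_def
    by (meson in_set_dropD in_set_takeD)
  have RI: "set R' \<inter> (set P1 \<union> set P2) \<subseteq> {x, y}"
  proof
    fix c assume c: "c \<in> set R' \<inter> (set P1 \<union> set P2)"
    then obtain k where k: "ix \<le> k" "k \<le> iy" "c = R ! k" using seg_set[of iy R ix] iy n_def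
      unfolding R'_def by auto
    then show "c \<in> {x, y}" using inter[of k] c unfolding x_def y_def
      by (cases "k = ix"; cases "k = iy") auto
  qed
  have Rs: "pw w R = pw w (seg R 0 ix) + pw w R' + pw w (seg R iy (n - 1))"
    using pw_seg_full[OF Rn, of w] seg_split[of 0 ix "n - 1" R w] seg_split[of ix iy "n - 1" R w] ix iy n_def
    unfolding R'_def by simp
  have A0: "is_walk V E (seg R 0 ix) \<and> hd (seg R 0 ix) = P1 ! i1 \<and> last (seg R 0 ix) = x"
    using segf[OF R(1), of 0 ix] ix R0 n_def x_def by auto
  have B0: "is_walk V E (seg R iy (n - 1)) \<and> hd (seg R iy (n - 1)) = y \<and> last (seg R iy (n - 1)) = P1 ! j1"
    using segf[OF R(1), of iy "n - 1"] iy R0 n_def y_def by auto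
  have xR: "x \<in> set R" "y \<in> set R" using ix iy n_def x_def y_def by auto
  show ?thesis
  proof (cases "x \<in> set P1 \<and> i1 \<le> pos P1 x \<and> pos P1 x < b1")
    case X1: True
    define a where "a = pos P1 x"
    have xa: "P1 ! a = x" "a < length P1" using pos_in[OF P1(2)] X1 a_def by auto
    have wa: "pw w (seg P1 i1 a) \<le> pw w (seg R 0 ix)"
      using seg_min[OF sp1, of i1 a "seg R 0 ix"] A0 X1 xa a_def by auto
    have sa: "pw w (seg P1 i1 j1) = pw w (seg P1 i1 a) + pw w (seg P1 a j1)"
      using seg_split[of i1 a j1 P1 w] X1 a_def ij1 by auto
    show ?thesis
    proof (cases "y \<in> set P1 \<and> b1 < pos P1 y \<and> pos P1 y \<le> j1")
      case Y1: True
      define c where "c = pos P1 y"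
      have yc: "P1 ! c = y" "c < length P1" using pos_in[OF P1(2)] Y1 c_def by auto
      have wc: "pw w (seg P1 c j1) \<le> pw w (seg R iy (n - 1))"
        using seg_min[OF sp1, of c j1 "seg R iy (n - 1)"] B0 Y1 yc c_def ij1 by auto
      have sc: "pw w (seg P1 a j1) = pw w (seg P1 a c) + pw w (seg P1 c j1)"
        using seg_split[of a c j1 P1 w] X1 Y1 a_def c_def ij1 by auto
      have h1: "a < b1" "b1 < c" "c < length P1" using X1 Y1 a_def c_def yc by auto
      have h2: "is_walk V E R'" "hd R' = P1 ! a" "last R' = P1 ! c" using R'f xa yc by auto
      have h3: "pw w R' \<le> pw w (seg P1 a c)" using Rs wa wc sa sc Rw by linarith
      have h4: "P1 ! b1 \<notin> set R'" using zR' z_def by simp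
      have h5: "set R' \<inter> set P2 \<subseteq> set P1" using RI X1 Y1 by blast
      obtain Q where Q: "shortest_path V E w Q s1 t1" "set Q \<inter> set P2 \<subseteq> (set P1 \<inter> set P2) - {P1 ! b1}"
        using same_case[OF sp1 h1 h2 h3 h4 h5] by blast
      then show ?thesis using sp2 by blast
    next
      case False
      then have Y2: "y \<in> set P2 \<and> b2 < pos P2 y \<and> pos P2 y \<le> j2" using iy Y_def y_def by auto
      define c where "c = pos P2 y"
      have yc: "P2 ! c = y" "c < length P2" using pos_in[OF P2(2)] Y2 c_def by auto
      have wc: "pw w (seg P2 c j2) \<le> pw w (seg R iy (n - 1))"
        using seg_min[OF sp2, of c j2 "seg R iy (n - 1)"] B0 Y2 yc c_def ij2 ev by auto
      have w2: "pw w (seg P1 b1 j1) \<le> pw w (seg P2 b2 j2)"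
        using seg_min[OF sp1, of b1 j1 "seg P2 b2 j2"] segf[OF P2(1), of b2 j2] ij1 ij2 ez ev by auto
      have h1: "a < b1" "b1 < j1" "j1 < length P1" using X1 a_def ij1 by auto
      have h2: "b2 < c" "c \<le> j2" "j2 < length P2" using Y2 c_def ij2 by auto
      have h3: "is_walk V E R'" "hd R' = P1 ! a" "last R' = P2 ! c" using R'f xa yc by auto
      have h4: "P1 ! b1 \<notin> set R'" using zR' z_def by simp
      have h5: "set R' \<inter> (set P1 \<union> set P2) \<subseteq> {P1 ! a, P2 ! c}" using RI xa yc by simp
      have h6: "pw w R' + pw w (seg P2 c j2) \<le> pw w (seg P1 a j1)" using Rs wa wc sa Rw by linarith
      show ?thesis
        using cross_case[OF sp1 sp2 h1 h2 ez[symmetric] ev[symmetric] h3 h4 h5 h6 w2] by blast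
    qed
  next
    case False
    then have X2: "x \<in> set P2 \<and> i2 \<le> pos P2 x \<and> pos P2 x < b2" using ix X_def x_def by auto
    define a where "a = pos P2 x"
    have xa: "P2 ! a = x" "a < length P2" using pos_in[OF P2(2)] X2 a_def by auto
    have wa: "pw w (seg P2 i2 a) \<le> pw w (seg R 0 ix)"
      using seg_min[OF sp2, of i2 a "seg R 0 ix"] A0 X2 xa a_def eu by auto
    have sa: "pw w (seg P2 i2 j2) = pw w (seg P2 i2 a) + pw w (seg P2 a j2)"
      using seg_split[of i2 a j2 P2 w] X2 a_def ij2 by auto
    show ?thesis
    proof (cases "y \<in> set P2 \<and> b2 < pos P2 y \<and> pos P2 y \<le> j2")
      case Y2: True
      define c where "c = pos P2 y"
      have yc: "P2 ! c = y" "c < length P2" using pos_in[OF P2(2)] Y2 c_def by auto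
      have wc: "pw w (seg P2 c j2) \<le> pw w (seg R iy (n - 1))"
        using seg_min[OF sp2, of c j2 "seg R iy (n - 1)"] B0 Y2 yc c_def ij2 ev by auto
      have sc: "pw w (seg P2 a j2) = pw w (seg P2 a c) + pw w (seg P2 c j2)"
        using seg_split[of a c j2 P2 w] X2 Y2 a_def c_def ij2 by auto
      have h1: "a < b2" "b2 < c" "c < length P2" using X2 Y2 a_def c_def yc by auto
      have h2: "is_walk V E R'" "hd R' = P2 ! a" "last R' = P2 ! c" using R'f xa yc by auto
      have h3: "pw w R' \<le> pw w (seg P2 a c)" using Rs wa wc sa sc Rw hw by linarith
      have h4: "P2 ! b2 \<notin> set R'" using zR' z_def ez by simp
      have h5: "set R' \<inter> set P1 \<subseteq> set P2" using RI X2 Y2 by blast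
      obtain Q where Q: "shortest_path V E w Q s2 t2" "set Q \<inter> set P1 \<subseteq> (set P2 \<inter> set P1) - {P2 ! b2}"
        using same_case[OF sp2 h1 h2 h3 h4 h5] by blast
      then show ?thesis using sp1 ez by blast
    next
      case False
      then have Y1: "y \<in> set P1 \<and> b1 < pos P1 y \<and> pos P1 y \<le> j1" using iy Y_def y_def by auto
      define c where "c = pos P1 y"
      have yc: "P1 ! c = y" "c < length P1" using pos_in[OF P1(2)] Y1 c_def by auto
      have wc: "pw w (seg P1 c j1) \<le> pw w (seg R iy (n - 1))"
        using seg_min[OF sp1, of c j1 "seg R iy (n - 1)"] B0 Y1 yc c_def ij1 by auto
      have w2: "pw w (seg P2 b2 j2) \<le> pw w (seg P1 b1 j1)"
        using seg_min[OF sp2, of b2 j2 "seg P1 b1 j1"] segf[OF P1(1), of b1 j1] ij1 ij2 ez ev by auto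
      have h1: "a < b2" "b2 < j2" "j2 < length P2" using X2 a_def ij2 by auto
      have h2: "b1 < c" "c \<le> j1" "j1 < length P1" using Y1 c_def ij1 by auto
      have h3: "is_walk V E R'" "hd R' = P2 ! a" "last R' = P1 ! c" using R'f xa yc by auto
      have h4: "P2 ! b2 \<notin> set R'" using zR' z_def ez by simp
      have h5: "set R' \<inter> (set P2 \<union> set P1) \<subseteq> {P2 ! a, P1 ! c}" using RI xa yc by auto
      have h6: "pw w R' + pw w (seg P1 c j1) \<le> pw w (seg P2 a j2)" using Rs wa wc sa Rw hw by linarith
      obtain Q1 Q2 where "shortest_path V E w Q1 s2 t2" "shortest_path V E w Q2 s1 t1"
         "set Q1 \<inter> set Q2 \<subseteq> (set P2 \<inter> set P1) - {P2 ! b2}"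
        using cross_case[OF sp2 sp1 h1 h2 ez ev h3 h4 h5 h6 w2] by blast
      then show ?thesis using ez by blast
    qed
  qed
qed

end


lemma dist_le_gen: "path_from_to V E p x y \<Longrightarrow> dist V E w x y \<le> ereal (pw w p)"
  unfolding dist_def by (rule Inf_lower) (auto simp: pweight_pw)

lemma avoid_path: "is_walk V E M \<Longrightarrow> distinct M \<Longrightarrow> z \<notin> set M \<Longrightarrow>
  is_path (del_vertex_V V z) (del_vertex_E E z) M"
  unfolding is_path_def is_walk_def del_vertex_V_def del_vertex_E_def
  by (auto dest: nth_mem)

lemma back_path: "is_path (del_vertex_V V z) (del_vertex_E E z) R \<Longrightarrow>
  is_walk V E R \<and> distinct R \<and> z \<notin> set R"
  unfolding is_path_def is_walk_def del_vertex_V_def del_vertex_E_def by auto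

lemma attain:
  assumes fin: "finite V'" and le: "dist V' E' w x y \<le> ereal D"
  shows "\<exists>p. path_from_to V' E' p x y \<and> pw w p \<le> D"
proof -
  define S where "S = {ereal (pweight w p) | p. path_from_to V' E' p x y}"
  have "{p. path_from_to V' E' p x y} \<subseteq> {p. set p \<subseteq> V' \<and> length p \<le> card V'}"
    unfolding path_from_to_def is_path_def is_walk_def
    by (auto simp: distinct_card[symmetric] intro: card_mono[OF fin])
  then have "finite {p. path_from_to V' E' p x y}"
    using finite_lists_length_le[OF fin, of "card V'"] finite_subset by blast
  then have finS: "finite S" unfolding S_def by (simp add: setcompr_eq_image)
  have neS: "S \<noteq> {}"
  proof
    assume "S = {}"
    then have "dist V' E' w x y = \<infinity>" unfolding dist_def S_def[symmetric] by (simp add: top_ereal_def)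
    then show False using le by simp
  qed
  have "Min S \<in> S" using Min_in[OF finS neS] .
  moreover have "Min S \<le> ereal D"
  proof -
    have "Min S \<le> Inf S" using Min_le[OF finS] by (intro Inf_greatest) auto
    then show ?thesis using le unfolding dist_def S_def[symmetric] by simp
  qed
  ultimately show ?thesis unfolding S_def by (auto simp: pweight_pw)
qed

lemma precedes_pos: "distinct P \<Longrightarrow> precedes P x y \<Longrightarrow> x \<in> set P \<and> y \<in> set P \<and> pos P x \<le> pos P y"
  unfolding precedes_def by auto

theorem lemma5:
  fixes V :: "'a set" and E :: "('a \<times> 'a) set" and w :: "'a \<Rightarrow> 'a \<Rightarrow> real"
    and s1 t1 s2 t2 u v :: 'a and P1 P2 :: "'a list"
  assumes "wf_digraph V E"
    and "\<And>c. is_cycle V E c \<Longrightarrow> pweight w c > 0"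
    and "reachable V E s1 t1" and "reachable V E s2 t2"
    and "shortest_path V E w P1 s1 t1" and "shortest_path V E w P2 s2 t2"
    and "n_common P1 s1 t1 P2 s2 t2 = kstar V E w s1 t1 s2 t2"
    and "concordant P1 s1 t1 P2 s2 t2 u v"
  shows "card (set (subpath P1 u v) \<inter> set (subpath P2 u v)) = delta V E w u v
    \<and> set (subpath P1 u v) \<inter> set (subpath P2 u v) = {z. dist_critical V E w u v z}"
proof -
  interpret posg V E w by unfold_locales (rule assms(2))
  note sp1 = assms(5) and sp2 = assms(6)
  have finV: "finite V" using assms(1) by (simp add: wf_digraph_def)
  have P1: "is_walk V E P1" "distinct P1" "P1 \<noteq> []" "P1 ! 0 = s1" "P1 ! (length P1 - 1) = t1" "set P1 \<subseteq> V"
    using spf[OF sp1] by auto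
  have P2: "is_walk V E P2" "distinct P2" "P2 \<noteq> []" "P2 ! 0 = s2" "P2 ! (length P2 - 1) = t2" "set P2 \<subseteq> V"
    using spf[OF sp2] by auto
  have pr1: "precedes P1 u v" and pr2: "precedes P2 u v" using assms(8) by (auto simp: concordant_def)
  define i1 where "i1 = pos P1 u"
  define j1 where "j1 = pos P1 v"
  define i2 where "i2 = pos P2 u"
  define j2 where "j2 = pos P2 v"
  have q1: "i1 \<le> j1" "j1 < length P1" "P1 ! i1 = u" "P1 ! j1 = v"
    using precedes_pos[OF P1(2) pr1] pos_in[OF P1(2), of u] pos_in[OF P1(2), of v] i1_def j1_def by auto
  have q2: "i2 \<le> j2" "j2 < length P2" "P2 ! i2 = u" "P2 ! j2 = v"
    using precedes_pos[OF P2(2) pr2] pos_in[OF P2(2), of u] pos_in[OF P2(2), of v] i2_def j2_def by auto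
  define M1 where "M1 = seg P1 i1 j1"
  define M2 where "M2 = seg P2 i2 j2"
  have sub: "subpath P1 u v = M1" "subpath P2 u v = M2"
    unfolding subpath_seg M1_def M2_def i1_def j1_def i2_def j2_def by auto
  have M1f: "is_walk V E M1" "hd M1 = u" "last M1 = v" "distinct M1" "M1 \<noteq> []"
    using segf[OF P1(1) q1(1,2)] q1 seg_distinct[OF P1(2)] seg_ne[OF q1(1,2)] unfolding M1_def by auto
  have M2f: "is_walk V E M2" "hd M2 = u" "last M2 = v" "distinct M2" "M2 \<noteq> []"
    using segf[OF P2(1) q2(1,2)] q2 seg_distinct[OF P2(2)] seg_ne[OF q2(1,2)] unfolding M2_def by auto
  have min1: "\<And>W. is_walk V E W \<Longrightarrow> hd W = u \<Longrightarrow> last W = v \<Longrightarrow> pw w M1 \<le> pw w W"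
    using seg_min[OF sp1 q1(1,2)] q1 unfolding M1_def by auto
  have min2: "\<And>W. is_walk V E W \<Longrightarrow> hd W = u \<Longrightarrow> last W = v \<Longrightarrow> pw w M2 \<le> pw w W"
    using seg_min[OF sp2 q2(1,2)] q2 unfolding M2_def by auto
  have hw: "pw w M1 = pw w M2" using min1[OF M2f(1-3)] min2[OF M1f(1-3)] by linarith
  have pM1: "path_from_to V E M1 u v" using M1f by (simp add: path_from_to_def is_path_def)
  have dG: "dist V E w u v = ereal (pw w M1)"
  proof (rule antisym)
    show "dist V E w u v \<le> ereal (pw w M1)" by (rule dist_le[OF pM1])
    show "ereal (pw w M1) \<le> dist V E w u v" unfolding dist_def
      by (rule Inf_greatest) (auto simp: pweight_pw path_from_to_def is_path_def intro: min1)
  qed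
  have setM1: "set M1 \<subseteq> V" "set M2 \<subseteq> V" using M1f(1) M2f(1) by (auto simp: is_walk_def)
  have eq: "set M1 \<inter> set M2 = {z. dist_critical V E w u v z}"
  proof (intro set_eqI iffI)
    fix z assume "z \<in> {z. dist_critical V E w u v z}"
    then have zc: "z \<in> V" "z \<in> {u, v} \<or> dist (del_vertex_V V z) (del_vertex_E E z) w u v > dist V E w u v"
      by (auto simp: dist_critical_def)
    have uv: "u \<in> set M1 \<inter> set M2" "v \<in> set M1 \<inter> set M2" using M1f M2f
      by (metis IntI hd_in_set last_in_set)+
    show "z \<in> set M1 \<inter> set M2"
    proof (cases "z \<in> {u, v}")
      case True then show ?thesis using uv by auto
    next
      case False
      then have gt: "dist (del_vertex_V V z) (del_vertex_E E z) w u v > ereal (pw w M1)" using zc dG by auto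
      have "z \<in> set M1"
      proof (rule ccontr)
        assume "z \<notin> set M1"
        then have "path_from_to (del_vertex_V V z) (del_vertex_E E z) M1 u v"
          using avoid_path[OF M1f(1) M1f(4)] M1f by (simp add: path_from_to_def)
        then show False using dist_le_gen gt by (metis not_le)
      qed
      moreover have "z \<in> set M2"
      proof (rule ccontr)
        assume "z \<notin> set M2"
        then have "path_from_to (del_vertex_V V z) (del_vertex_E E z) M2 u v"
          using avoid_path[OF M2f(1) M2f(4)] M2f by (simp add: path_from_to_def)
        then show False using dist_le_gen gt hw by (metis not_le)
      qed
      ultimately show ?thesis by auto
    qed
  next
    fix z assume z: "z \<in> set M1 \<inter> set M2"
    have zV: "z \<in> V" using z setM1 by auto
    show "z \<in> {z. dist_critical V E w u v z}"
    proof (cases "z \<in> {u, v}")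
      case True then show ?thesis using zV by (auto simp: dist_critical_def)
    next
      case False
      show ?thesis
      proof (rule ccontr)
        assume "z \<notin> {z. dist_critical V E w u v z}"
        then have "\<not> dist (del_vertex_V V z) (del_vertex_E E z) w u v > ereal (pw w M1)"
          using zV dG by (simp add: dist_critical_def)
        then have "dist (del_vertex_V V z) (del_vertex_E E z) w u v \<le> ereal (pw w M1)" by simp
        then obtain R where R: "path_from_to (del_vertex_V V z) (del_vertex_E E z) R u v" "pw w R \<le> pw w M1"
          using attain[of "del_vertex_V V z" "del_vertex_E E z" w u v "pw w M1"] finV by (auto simp: del_vertex_V_def)
        have Rf: "is_walk V E R" "distinct R" "z \<notin> set R" "hd R = u" "last R = v"
          using back_path[of V z E R] R(1) by (auto simp: path_from_to_def)
        define b1 where "b1 = pos P1 z"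
        define b2 where "b2 = pos P2 z"
        have zb1: "i1 \<le> b1" "b1 \<le> j1" "z \<in> set P1" using z seg_mem[OF P1(2) q1(2), of z i1] b1_def M1_def by auto
        have zb2: "i2 \<le> b2" "b2 \<le> j2" "z \<in> set P2" using z seg_mem[OF P2(2) q2(2), of z i2] b2_def M2_def by auto
        have Pz: "P1 ! b1 = z" "P2 ! b2 = z" "b1 < length P1" "b2 < length P2"
          using pos_in[OF P1(2) zb1(3)] pos_in[OF P2(2) zb2(3)] b1_def b2_def by auto
        have b1: "i1 < b1" "b1 < j1" using zb1 Pz q1 False by (metis insertCI le_neq_implies_less)+
        have b2: "i2 < b2" "b2 < j2" using zb2 Pz q2 False by (metis insertCI le_neq_implies_less)+
        obtain Q1 Q2 where Q: "shortest_path V E w Q1 s1 t1" "shortest_path V E w Q2 s2 t2"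
          "set Q1 \<inter> set Q2 \<subseteq> (set P1 \<inter> set P2) - {P1 ! b1}"
        proof -
          have e1: "P1 ! i1 = P2 ! i2" "P1 ! j1 = P2 ! j2" "P1 ! b1 = P2 ! b2" using q1 q2 Pz by auto
          have e2: "pw w (seg P1 i1 j1) = pw w (seg P2 i2 j2)" using hw unfolding M1_def M2_def .
          have e3: "hd R = P1 ! i1" "last R = P1 ! j1" "P1 ! b1 \<notin> set R" using Rf q1 Pz by auto
          have e4: "pw w R \<le> pw w (seg P1 i1 j1)" using R(2) unfolding M1_def .
          show thesis using exchange[OF sp1 sp2 b1 q1(2) b2 q2(2) e1 e2 Rf(1,2) e3 e4] that by blast
        qed
        define S where "S = {s1, t1} \<inter> {s2, t2}"
        have zS: "z \<notin> S"
        proof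
          assume "z \<in> S"
          then have "z = s1 \<or> z = t1" unfolding S_def by auto
          then have "b1 = 0 \<or> b1 = length P1 - 1"
            using pos_nth[OF P1(2), of 0] pos_nth[OF P1(2), of "length P1 - 1"] P1 b1_def by auto
          then show False using b1 q1 by auto
        qed
        have sub2: "(set Q1 \<inter> set Q2) - S \<subset> (set P1 \<inter> set P2) - S"
          using Q(3) Pz zS zb1 zb2 by auto
        have "n_common Q1 s1 t1 Q2 s2 t2 < n_common P1 s1 t1 P2 s2 t2"
          unfolding n_common_def S_def[symmetric] by (rule psubset_card_mono) (use sub2 in auto)
        moreover have "kstar V E w s1 t1 s2 t2 \<le> n_common Q1 s1 t1 Q2 s2 t2"
          unfolding kstar_def by (rule Least_le) (use Q in blast)
        ultimately show False using assms(7) by simp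
      qed
    qed
  qed
  show ?thesis unfolding sub delta_def eq by simp
qed


end
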